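(* Let $S$ be a semigroup and $T$ a subsemigroup of $S$ such that $S\setminus T$ is finite, and suppose that $T$ is finitely right equated. Then $S$ is finitely right equated if and only if $\mathbf{r}_S(a)$ is finitely generated as a right congruence on $S$ for each $a\in S\setminus T$.
   Context: For a semigroup $S$ and $a\in S$, $\mathbf{r}_S(a)=\{(s,t)\in S\times S\mid as=at\}$ (a right congruence); $S$ is finitely right equated if each $\mathbf{r}_S(a)$ is finitely generated as a right congruence, i.e. is the smallest right congruence containing some finite set. *)

theory Defs
  imports Main
begin

definition semigroup_on :: "'a set \<Rightarrow> ('a \<Rightarrow> 'a \<Rightarrow> 'a) \<Rightarrow> bool" where
  "semigroup_on S f \<longleftrightarrow> (\<forall>x\<in>S. \<forall>y\<in>S. f x y \<in> S) \<and>
     (\<forall>x\<in>S. \<forall>y\<in>S. \<forall>z\<in>S. f (f x y) z = f x (f y z))"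

definition subsemigroup :: "'a set \<Rightarrow> 'a set \<Rightarrow> ('a \<Rightarrow> 'a \<Rightarrow> 'a) \<Rightarrow> bool" where
  "subsemigroup T S f \<longleftrightarrow> T \<subseteq> S \<and> T \<noteq> {} \<and> (\<forall>x\<in>T. \<forall>y\<in>T. f x y \<in> T)"

definition right_congruence :: "'a set \<Rightarrow> ('a \<Rightarrow> 'a \<Rightarrow> 'a) \<Rightarrow> 'a rel \<Rightarrow> bool" where
  "right_congruence S f \<rho> \<longleftrightarrow> equiv S \<rho> \<and>
     (\<forall>s t u. (s, t) \<in> \<rho> \<longrightarrow> u \<in> S \<longrightarrow> (f s u, f t u) \<in> \<rho>)"

definition right_congruence_gen :: "'a set \<Rightarrow> ('a \<Rightarrow> 'a \<Rightarrow> 'a) \<Rightarrow> 'a rel \<Rightarrow> 'a rel" where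
  "right_congruence_gen S f X = \<Inter>{\<rho>. right_congruence S f \<rho> \<and> X \<subseteq> \<rho>}"

definition fg_right_congruence :: "'a set \<Rightarrow> ('a \<Rightarrow> 'a \<Rightarrow> 'a) \<Rightarrow> 'a rel \<Rightarrow> bool" where
  "fg_right_congruence S f \<rho> \<longleftrightarrow>
     (\<exists>X. finite X \<and> X \<subseteq> S \<times> S \<and> \<rho> = right_congruence_gen S f X)"

definition r_annih :: "'a set \<Rightarrow> ('a \<Rightarrow> 'a \<Rightarrow> 'a) \<Rightarrow> 'a \<Rightarrow> 'a rel" where
  "r_annih S f a = {(s, t). s \<in> S \<and> t \<in> S \<and> f a s = f a t}"

definition finitely_right_equated :: "'a set \<Rightarrow> ('a \<Rightarrow> 'a \<Rightarrow> 'a) \<Rightarrow> bool" where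
  "finitely_right_equated S f \<longleftrightarrow> (\<forall>a\<in>S. fg_right_congruence S f (r_annih S f a))"

end

theory Submission
  imports Defs
begin

lemma rc_restrict:
  assumes "right_congruence S f R" "subsemigroup T S f"
  shows "right_congruence T f (R \<inter> T \<times> T)"
proof -
  have TS: "T \<subseteq> S" and cl: "\<And>x y. x \<in> T \<Longrightarrow> y \<in> T \<Longrightarrow> f x y \<in> T"
    using assms(2) unfolding subsemigroup_def by auto
  have e: "equiv S R" and c: "\<And>s t u. (s, t) \<in> R \<Longrightarrow> u \<in> S \<Longrightarrow> (f s u, f t u) \<in> R"
    using assms(1) unfolding right_congruence_def by auto
  have "equiv T (R \<inter> T \<times> T)"
    using e TS unfolding equiv_def refl_on_def sym_def trans_def by blast
  moreover have "(f s u, f t u) \<in> R \<inter> T \<times> T" if "(s, t) \<in> R \<inter> T \<times> T" "u \<in> T" for s t u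
    using that c cl TS by blast
  ultimately show ?thesis unfolding right_congruence_def by blast
qed

lemma rc_annih:
  assumes "semigroup_on S f" "a \<in> S"
  shows "right_congruence S f (r_annih S f a)"
  unfolding right_congruence_def equiv_def refl_on_def sym_def trans_def
proof (intro conjI allI impI)
  fix s t u assume "(s, t) \<in> r_annih S f a" "u \<in> S"
  then show "(f s u, f t u) \<in> r_annih S f a"
    using assms unfolding semigroup_on_def r_annih_def by (auto) (metis)
qed (auto simp: r_annih_def)

lemma gen_least:
  "right_congruence S f R \<Longrightarrow> X \<subseteq> R \<Longrightarrow> right_congruence_gen S f X \<subseteq> R"
  unfolding right_congruence_gen_def by blast

lemma gen_mem:
  "(p \<in> right_congruence_gen S f X) \<longleftrightarrow> (\<forall>\<rho>. right_congruence S f \<rho> \<and> X \<subseteq> \<rho> \<longrightarrow> p \<in> \<rho>)"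
  unfolding right_congruence_gen_def by blast

lemma rc_sym: "right_congruence S f R \<Longrightarrow> (x,y) \<in> R \<Longrightarrow> (y,x) \<in> R"
  unfolding right_congruence_def equiv_def sym_def by blast

lemma rc_trans: "right_congruence S f R \<Longrightarrow> (x,y) \<in> R \<Longrightarrow> (y,z) \<in> R \<Longrightarrow> (x,z) \<in> R"
  unfolding right_congruence_def equiv_def trans_def by blast

lemma key:
  assumes sg: "semigroup_on S f"
    and sub: "subsemigroup T S f"
    and fin: "finite (S - T)"
    and fgT: "fg_right_congruence T f (r_annih T f a)"
    and aT: "a \<in> T"
  shows "fg_right_congruence S f (r_annih S f a)"
proof -
  have TS: "T \<subseteq> S" using sub unfolding subsemigroup_def by blast
  have aS: "a \<in> S" using aT TS by blast
  obtain X where X: "finite X" "X \<subseteq> T \<times> T" "r_annih T f a = right_congruence_gen T f X"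
    using fgT unfolding fg_right_congruence_def by blast
  define U where "U = S - T"
  define c where "c u = (if \<exists>t\<in>T. f a u = f a t then SOME t. t \<in> T \<and> f a u = f a t else u)" for u
  have c1: "c u \<in> T \<and> f a u = f a (c u)" if "\<exists>t\<in>T. f a u = f a t" for u
  proof -
    have "\<exists>t. t \<in> T \<and> f a u = f a t" using that by blast
    from someI_ex[OF this] show ?thesis using that unfolding c_def by simp
  qed
  have c2: "f a u = f a (c u)" for u
    using c1[of u] unfolding c_def by auto
  have c3: "c u \<in> S" if "u \<in> S" for u
    using c1[of u] that TS unfolding c_def by auto
  define Y where "Y = X \<union> (\<lambda>u. (u, c u)) ` U \<union> (r_annih S f a \<inter> U \<times> U)"
  have finY: "finite Y" unfolding Y_def using X(1) fin U_def
    by (intro finite_UnI finite_imageI) (auto intro: finite_subset[of _ "U \<times> U"])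
  have YS: "Y \<subseteq> S \<times> S" unfolding Y_def U_def using X(2) TS c3 r_annih_def by auto
  have rTS: "r_annih T f a \<subseteq> r_annih S f a" using TS unfolding r_annih_def by auto
  have XT: "X \<subseteq> r_annih T f a" using X(3) unfolding right_congruence_gen_def by blast
  have Ysub: "Y \<subseteq> r_annih S f a"
    unfolding Y_def using XT rTS c2 c3 U_def unfolding r_annih_def by auto
  have "r_annih S f a = right_congruence_gen S f Y"
  proof
    show "right_congruence_gen S f Y \<subseteq> r_annih S f a"
      by (rule gen_least[OF rc_annih[OF sg aS] Ysub])
  next
    show "r_annih S f a \<subseteq> right_congruence_gen S f Y"
    proof
      fix p assume p: "p \<in> r_annih S f a"
      obtain s t where st: "p = (s,t)" "s \<in> S" "t \<in> S" "f a s = f a t"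
        using p unfolding r_annih_def by auto
      show "p \<in> right_congruence_gen S f Y"
        unfolding gen_mem
      proof (intro allI impI)
        fix \<rho> assume h: "right_congruence S f \<rho> \<and> Y \<subseteq> \<rho>"
        have rc: "right_congruence S f \<rho>" and Yr: "Y \<subseteq> \<rho>" using h by auto
        have hT: "r_annih T f a \<subseteq> \<rho>"
          using gen_least[OF rc_restrict[OF rc sub], of X] X XT Yr unfolding Y_def by auto
        show "p \<in> \<rho>"
        proof (cases "s \<in> T")
          case sT: True
          show ?thesis
          proof (cases "t \<in> T")
            case True then show ?thesis using sT st hT unfolding r_annih_def by auto
          next
            case False
            then have tU: "t \<in> U" using st U_def by auto
            have "\<exists>x\<in>T. f a t = f a x" using sT st by metis
            from c1[OF this] have ct: "c t \<in> T" "f a t = f a (c t)" by auto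
            have "(t, c t) \<in> \<rho>" using Yr tU unfolding Y_def by auto
            moreover have "(s, c t) \<in> \<rho>" using hT sT ct st unfolding r_annih_def by auto
            ultimately show ?thesis using st rc_sym[OF rc] rc_trans[OF rc] by blast
          qed
        next
          case sF: False
          then have sU: "s \<in> U" using st U_def by auto
          show ?thesis
          proof (cases "t \<in> T")
            case tT: True
            have "\<exists>x\<in>T. f a s = f a x" using tT st by metis
            from c1[OF this] have cs: "c s \<in> T" "f a s = f a (c s)" by auto
            have "(s, c s) \<in> \<rho>" using Yr sU unfolding Y_def by auto
            moreover have "(c s, t) \<in> \<rho>" using hT tT cs st unfolding r_annih_def by auto
            ultimately show ?thesis using st rc_trans[OF rc] by blast
          next
            case False
            then have "t \<in> U" using st U_def by auto
            then have "p \<in> Y" using sU p unfolding Y_def st by auto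
            then show ?thesis using Yr by auto
          qed
        qed
      qed
    qed
  qed
  then show ?thesis unfolding fg_right_congruence_def using finY YS by blast
qed

theorem mainTheorem11:
  fixes S T :: "'a set" and f :: "'a \<Rightarrow> 'a \<Rightarrow> 'a"
  assumes "semigroup_on S f"
    and "subsemigroup T S f"
    and "finite (S - T)"
    and "finitely_right_equated T f"
  shows "finitely_right_equated S f \<longleftrightarrow>
           (\<forall>a \<in> S - T. fg_right_congruence S f (r_annih S f a))"
  using key[OF assms(1,2,3)] assms(4) unfolding finitely_right_equated_def by blast

end
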